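(* Let $X$ and $Y$ be real Banach spaces such that $Y$ is uniformly convex and the set of norm-attaining operators $\mathrm{NA}(\mathcal F(X),Y)$ is dense in $\mathcal L(\mathcal F(X),Y)$. Then $\mathrm{A}(X,Y)$ is dense in $\mathrm{Lip}_0(X,Y)$.
   Context: $\widetilde X=\{(x,y)\in X^2:x\neq y\}$. $\mathrm{Lip}_0(X,Y)$ is the Banach space of Lipschitz $f\colon X\to Y$ with $f(0)=0$ and norm $\|f\|=\sup_{(x,y)\in\widetilde X}\|f(x)-f(y)\|/\|x-y\|$. The Lipschitz-free space $\mathcal F(X)$ is the closed linear span of $\{\delta_x:x\in X\}$ in $\mathrm{Lip}_0(X,\mathbb R)^*$, $\delta_x(g)=g(x)$. $\mathcal L(Z,Y)$ is the space of bounded linear operators with the operator norm, and $\mathrm{NA}(Z,Y)$ the set of $T\in\mathcal L(Z,Y)$ with $\|Tz\|=\|T\|$ for some $z\in S_Z$. $\mathrm{A}(X,Y)$ is the set of $f\in\mathrm{Lip}_0(X,Y)$ for which there exist $z\in Y$ with $\|z\|=\|f\|$ and $(x_n,y_n)\in\widetilde X$ with $\frac{f(x_n)-f(y_n)}{\|x_n-y_n\|}\to z$. *)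

theory Defs
  imports "HOL-Analysis.Analysis"
begin

text \<open>Lipschitz constant (norm of Lip_0). The supremum is taken over the set
  with 0 inserted, which does not change it (all quotients are nonnegative) and
  avoids the empty supremum when X is trivial.\<close>
definition lipnorm :: "('a::real_normed_vector \<Rightarrow> 'b::real_normed_vector) \<Rightarrow> real" where
  "lipnorm f = Sup (insert 0 {norm (f x - f y) / norm (x - y) | x y. x \<noteq> y})"

definition Lip0 :: "('a::real_normed_vector \<Rightarrow> 'b::real_normed_vector) set" where
  "Lip0 = {f. f 0 = 0 \<and> (\<exists>C. C-lipschitz_on UNIV f)}"

text \<open>Functionals on Lip_0(X,R), represented as maps on ('a => real) that vanish
  outside Lip0.\<close>
definition dualnorm :: "(('a::real_normed_vector \<Rightarrow> real) \<Rightarrow> real) \<Rightarrow> real" where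
  "dualnorm \<phi> = Sup {\<bar>\<phi> g\<bar> | g. g \<in> Lip0 \<and> lipnorm g \<le> 1}"

definition dirac :: "'a::real_normed_vector \<Rightarrow> (('a \<Rightarrow> real) \<Rightarrow> real)" where
  "dirac x = (\<lambda>g. if g \<in> Lip0 then g x else 0)"

definition free_span :: "(('a::real_normed_vector \<Rightarrow> real) \<Rightarrow> real) set" where
  "free_span = {\<phi>. \<exists>n (a::nat \<Rightarrow> real) (p::nat \<Rightarrow> 'a).
                     \<phi> = (\<lambda>g. \<Sum>i<n. a i * dirac (p i) g)}"

definition free_space :: "(('a::real_normed_vector \<Rightarrow> real) \<Rightarrow> real) set" where
  "free_space = {\<phi>. (\<forall>g. g \<notin> Lip0 \<longrightarrow> \<phi> g = 0) \<and>
      (\<forall>\<epsilon>>0. \<exists>\<psi>\<in>free_span. \<forall>g\<in>Lip0. lipnorm g \<le> 1 \<longrightarrow> \<bar>\<phi> g - \<psi> g\<bar> \<le> \<epsilon>)}"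

text \<open>Bounded linear operators F(X) -> Y (only values on F(X) matter).\<close>
definition free_ops :: "((('a::real_normed_vector \<Rightarrow> real) \<Rightarrow> real) \<Rightarrow> 'b::real_normed_vector) set" where
  "free_ops = {T. (\<forall>\<phi>\<in>free_space. \<forall>\<psi>\<in>free_space. \<forall>a b.
                     T (\<lambda>g. a * \<phi> g + b * \<psi> g) = a *\<^sub>R T \<phi> + b *\<^sub>R T \<psi>) \<and>
                  (\<exists>C. \<forall>\<phi>\<in>free_space. norm (T \<phi>) \<le> C * dualnorm \<phi>)}"

definition free_opnorm :: "((('a::real_normed_vector \<Rightarrow> real) \<Rightarrow> real) \<Rightarrow> 'b::real_normed_vector) \<Rightarrow> real" where
  "free_opnorm T = Sup (insert 0 {norm (T \<phi>) | \<phi>. \<phi> \<in> free_space \<and> dualnorm \<phi> \<le> 1})"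

definition free_NA :: "((('a::real_normed_vector \<Rightarrow> real) \<Rightarrow> real) \<Rightarrow> 'b::real_normed_vector) set" where
  "free_NA = {T \<in> free_ops. \<exists>\<phi>\<in>free_space. dualnorm \<phi> = 1 \<and> norm (T \<phi>) = free_opnorm T}"

definition uniformly_convex_space :: "'b::real_normed_vector itself \<Rightarrow> bool" where
  "uniformly_convex_space _ \<longleftrightarrow> (\<forall>\<epsilon>>0. \<exists>\<delta>>0. \<forall>x y::'b. norm x \<le> 1 \<longrightarrow> norm y \<le> 1 \<longrightarrow>
      norm (x - y) \<ge> \<epsilon> \<longrightarrow> norm ((1/2) *\<^sub>R (x + y)) \<le> 1 - \<delta>)"

definition lipA :: "('a::real_normed_vector \<Rightarrow> 'b::real_normed_vector) set" where
  "lipA = {f \<in> Lip0. \<exists>z xs ys. norm z = lipnorm f \<and> (\<forall>n. xs n \<noteq> ys n) \<and>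
      ((\<lambda>n. (1 / norm (xs n - ys n)) *\<^sub>R (f (xs n) - f (ys n))) \<longlonglongrightarrow> z)}"

end

theory Submission
  imports Defs
begin

lemma lip0_bdd:
  fixes f :: "'a::real_normed_vector \<Rightarrow> 'b::real_normed_vector"
  assumes "f \<in> Lip0"
  shows "bdd_above {norm (f x - f y) / norm (x - y) | x y. x \<noteq> y}"
proof -
  from assms obtain C where C: "C-lipschitz_on UNIV f" unfolding Lip0_def by auto
  have "norm (f x - f y) / norm (x - y) \<le> C" if "x \<noteq> y" for x y
  proof -
    have "norm (f x - f y) \<le> C * norm (x - y)" using lipschitz_onD[OF C] by (simp add: dist_norm)
    then show ?thesis using that by (simp add: divide_le_eq mult.commute)
  qed
  then show ?thesis by (intro bdd_aboveI) blast
qed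

lemma lipnorm_nonneg:
  fixes f :: "'a::real_normed_vector \<Rightarrow> 'b::real_normed_vector"
  assumes "f \<in> Lip0" shows "0 \<le> lipnorm f"
  unfolding lipnorm_def using lip0_bdd[OF assms] by (intro cSup_upper) auto

lemma lip_bound:
  fixes f :: "'a::real_normed_vector \<Rightarrow> 'b::real_normed_vector"
  assumes "f \<in> Lip0"
  shows "norm (f x - f y) \<le> lipnorm f * norm (x - y)"
proof (cases "x = y")
  case True then show ?thesis by simp
next
  case False
  have "norm (f x - f y) / norm (x - y) \<le> lipnorm f"
    unfolding lipnorm_def using lip0_bdd[OF assms] False by (intro cSup_upper) auto
  then show ?thesis using False by (simp add: divide_le_eq mult.commute)
qed

lemma lipnorm_le:
  fixes f :: "'a::real_normed_vector \<Rightarrow> 'b::real_normed_vector"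
  assumes "\<And>x y. norm (f x - f y) \<le> B * norm (x - y)" "0 \<le> B"
  shows "lipnorm f \<le> B"
  unfolding lipnorm_def
proof (rule cSup_least)
  fix r assume "r \<in> insert 0 {norm (f x - f y) / norm (x - y) | x y. x \<noteq> y}"
  then show "r \<le> B" using assms by (auto simp: divide_le_eq mult.commute)
qed auto

lemma Lip0I:
  fixes f :: "'a::real_normed_vector \<Rightarrow> 'b::real_normed_vector"
  assumes "\<And>x y. norm (f x - f y) \<le> B * norm (x - y)" "f 0 = 0"
  shows "f \<in> Lip0"
proof -
  have "(max B 0)-lipschitz_on UNIV f"
  proof (rule lipschitz_onI)
    fix x y :: 'a
    have "norm (f x - f y) \<le> max B 0 * norm (x - y)"
      by (rule order_trans[OF assms(1)]) (simp add: mult_right_mono)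
    then show "dist (f x) (f y) \<le> max B 0 * dist x y" by (simp add: dist_norm)
  qed simp
  then show ?thesis unfolding Lip0_def using assms(2) by blast
qed

lemma zero_Lip0: "(\<lambda>x::'a::real_normed_vector. 0::real) \<in> Lip0"
  by (rule Lip0I[where B=0]) auto

lemma zero_lipnorm: "lipnorm (\<lambda>x::'a::real_normed_vector. 0::real) \<le> 1"
  by (rule order_trans[OF lipnorm_le[where B=0]]) auto

definition hbg :: "('b::real_normed_vector \<times> real) set \<Rightarrow> bool" where
  "hbg G \<longleftrightarrow> (0,0) \<in> G \<and> (\<forall>x a y b. (x,a)\<in>G \<longrightarrow> (y,b)\<in>G \<longrightarrow> (x+y, a+b) \<in> G)
     \<and> (\<forall>x a c. (x,a) \<in> G \<longrightarrow> (c *\<^sub>R x, c*a) \<in> G) \<and> (\<forall>x a. (x,a)\<in>G \<longrightarrow> a \<le> norm x)"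

lemma hbg_unique:
  assumes "hbg G" "(x,a) \<in> G" "(x,b) \<in> G" shows "a = b"
proof -
  have "(x + (-1) *\<^sub>R x, a + (-1) * b) \<in> G" "(x + (-1) *\<^sub>R x, b + (-1) * a) \<in> G"
    using assms unfolding hbg_def by blast+
  then have "a - b \<le> 0" "b - a \<le> 0" using assms(1) unfolding hbg_def by fastforce+
  then show ?thesis by simp
qed

lemma hbg_extend:
  assumes G: "hbg G" and x0: "\<forall>a. (x0,a) \<notin> G"
  shows "\<exists>G'. hbg G' \<and> G \<subseteq> G' \<and> G' \<noteq> G"
proof -
  define c where "c = Sup {b - norm (w - x0) | w b. (w,b) \<in> G}"
  have key: "b' - norm (w' - x0) \<le> norm (w + x0) - b" if "(w,b) \<in> G" "(w',b') \<in> G" for w b w' b'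
  proof -
    have "(w + w', b + b') \<in> G" using G that unfolding hbg_def by blast
    then have "b + b' \<le> norm (w + w')" using G unfolding hbg_def by blast
    also have "w + w' = (w + x0) + (w' - x0)" by simp
    also have "norm \<dots> \<le> norm (w + x0) + norm (w' - x0)" by (rule norm_triangle_ineq)
    finally show ?thesis by simp
  qed
  have ne: "{b - norm (w - x0) | w b. (w,b) \<in> G} \<noteq> {}" using G unfolding hbg_def by blast
  have c1: "b - norm (w - x0) \<le> c" if "(w,b) \<in> G" for w b
    unfolding c_def
  proof (rule cSup_upper)
    show "b - norm (w - x0) \<in> {b - norm (w - x0) | w b. (w,b) \<in> G}" using that by blast
    show "bdd_above {b - norm (w - x0) | w b. (w,b) \<in> G}"
    proof -
      have "(0,0) \<in> G" using G unfolding hbg_def by blast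
      then show ?thesis using key by (intro bdd_aboveI[where M="norm (0 + x0) - 0"]) blast
    qed
  qed
  have c2: "c \<le> norm (w + x0) - b" if "(w,b) \<in> G" for w b
    unfolding c_def using ne key that by (intro cSup_least) auto
  define G' where "G' = {(v + t *\<^sub>R x0, a + t * c) | v a t. (v,a) \<in> G}"
  have bnd: "a + t * c \<le> norm (v + t *\<^sub>R x0)" if "(v,a) \<in> G" for v a t
  proof -
    consider "t = 0" | "t > 0" | "t < 0" by linarith
    then show ?thesis
    proof cases
      case 1 then show ?thesis using G that unfolding hbg_def by auto
    next
      case 2
      have "((1/t) *\<^sub>R v, (1/t) * a) \<in> G" using G that unfolding hbg_def by blast
      from c2[OF this] have "t * c \<le> t * (norm ((1/t) *\<^sub>R v + x0) - (1/t) * a)"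
        using 2 by (simp add: mult_left_mono)
      also have "\<dots> = t * norm ((1/t) *\<^sub>R v + x0) - a" using 2 by (simp add: algebra_simps)
      also have "t * norm ((1/t) *\<^sub>R v + x0) = norm (t *\<^sub>R ((1/t) *\<^sub>R v + x0))" using 2 by simp
      also have "t *\<^sub>R ((1/t) *\<^sub>R v + x0) = v + t *\<^sub>R x0" using 2 by (simp add: algebra_simps)
      finally show ?thesis by simp
    next
      case 3
      define s where "s = - t"
      have s: "s > 0" using 3 s_def by simp
      have "((1/s) *\<^sub>R v, (1/s) * a) \<in> G" using G that unfolding hbg_def by blast
      from c1[OF this] have "s * ((1/s) * a - norm ((1/s) *\<^sub>R v - x0)) \<le> s * c"
        using s by (simp add: mult_left_mono)
      also have "s * ((1/s) * a - norm ((1/s) *\<^sub>R v - x0)) = a - s * norm ((1/s) *\<^sub>R v - x0)"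
        using s by (simp add: algebra_simps)
      also have "s * norm ((1/s) *\<^sub>R v - x0) = norm (s *\<^sub>R ((1/s) *\<^sub>R v - x0))" using s by simp
      also have "s *\<^sub>R ((1/s) *\<^sub>R v - x0) = v + t *\<^sub>R x0" using s by (simp add: algebra_simps s_def)
      finally show ?thesis by (simp add: s_def)
    qed
  qed
  have "hbg G'"
    unfolding hbg_def
  proof (intro conjI allI impI)
    show "(0,0) \<in> G'" unfolding G'_def using G unfolding hbg_def by force
  next
    fix x a y b assume "(x,a) \<in> G'" "(y,b) \<in> G'"
    then obtain v1 a1 t1 v2 a2 t2 where "(v1,a1) \<in> G" "(v2,a2) \<in> G"
      "x = v1 + t1 *\<^sub>R x0" "a = a1 + t1 * c" "y = v2 + t2 *\<^sub>R x0" "b = a2 + t2 * c"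
      unfolding G'_def by blast
    moreover then have "(v1 + v2, a1 + a2) \<in> G" using G unfolding hbg_def by blast
    moreover have "x + y = (v1 + v2) + (t1 + t2) *\<^sub>R x0 \<and> a + b = (a1 + a2) + (t1 + t2) * c"
      using calculation by (simp add: algebra_simps)
    ultimately show "(x + y, a + b) \<in> G'" unfolding G'_def by blast
  next
    fix x a and r :: real assume "(x,a) \<in> G'"
    then obtain v1 a1 t1 where "(v1,a1) \<in> G" "x = v1 + t1 *\<^sub>R x0" "a = a1 + t1 * c"
      unfolding G'_def by blast
    moreover then have "(r *\<^sub>R v1, r * a1) \<in> G" using G unfolding hbg_def by blast
    moreover have "r *\<^sub>R x = r *\<^sub>R v1 + (r * t1) *\<^sub>R x0 \<and> r * a = r * a1 + (r * t1) * c"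
      using calculation by (simp add: algebra_simps)
    ultimately show "(r *\<^sub>R x, r * a) \<in> G'" unfolding G'_def by blast
  next
    fix x a assume "(x,a) \<in> G'"
    then show "a \<le> norm x" unfolding G'_def using bnd by blast
  qed
  moreover have "G \<subseteq> G'" unfolding G'_def by force
  moreover have "(x0, c) \<in> G'"
  proof -
    have "(0,0) \<in> G" using G unfolding hbg_def by blast
    moreover have "x0 = 0 + 1 *\<^sub>R x0 \<and> c = 0 + 1 * c" by simp
    ultimately show ?thesis unfolding G'_def by blast
  qed
  ultimately show ?thesis using x0 by blast
qed

lemma hbgD:
  assumes "hbg G"
  shows "(0,0) \<in> G" "(x,a)\<in>G \<Longrightarrow> (y,b)\<in>G \<Longrightarrow> (x+y, a+b) \<in> G"
    "(x,a) \<in> G \<Longrightarrow> (c *\<^sub>R x, c*a) \<in> G" "(x,a)\<in>G \<Longrightarrow> a \<le> norm x"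
  using assms unfolding hbg_def by blast+

lemma hbgI:
  assumes "(0,0) \<in> G" "\<And>x a y b. (x,a)\<in>G \<Longrightarrow> (y,b)\<in>G \<Longrightarrow> (x+y, a+b) \<in> G"
    "\<And>x a c. (x,a) \<in> G \<Longrightarrow> (c *\<^sub>R x, c*a) \<in> G" "\<And>x a. (x,a)\<in>G \<Longrightarrow> a \<le> norm x"
  shows "hbg G"
  using assms unfolding hbg_def by blast

lemma hahn_banach_norming:
  fixes u :: "'b::real_normed_vector"
  shows "\<exists>F. linear F \<and> (\<forall>v. \<bar>F v\<bar> \<le> norm v) \<and> F u = norm u"
proof -
  define G0 where "G0 = {(t *\<^sub>R u, t * norm u) | t. True}"
  define A where "A = {G. hbg G \<and> G0 \<subseteq> G}"
  have G0: "hbg G0"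
  proof (rule hbgI)
    show "(0, 0) \<in> G0" unfolding G0_def by (auto intro!: exI[where x=0])
  next
    fix x a y b assume "(x, a) \<in> G0" "(y, b) \<in> G0"
    then obtain t s where "x = t *\<^sub>R u" "a = t * norm u" "y = s *\<^sub>R u" "b = s * norm u"
      unfolding G0_def by blast
    then have "x + y = (t + s) *\<^sub>R u \<and> a + b = (t + s) * norm u"
      by (simp add: scaleR_add_left distrib_right)
    then show "(x + y, a + b) \<in> G0" unfolding G0_def by blast
  next
    fix x a c assume "(x, a) \<in> G0"
    then obtain t where "x = t *\<^sub>R u" "a = t * norm u" unfolding G0_def by blast
    then have "c *\<^sub>R x = (c * t) *\<^sub>R u \<and> c * a = (c * t) * norm u" by simp
    then show "(c *\<^sub>R x, c * a) \<in> G0" unfolding G0_def by blast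
  next
    fix x a assume "(x, a) \<in> G0"
    then obtain t where "x = t *\<^sub>R u" "a = t * norm u" unfolding G0_def by blast
    then show "a \<le> norm x" by (simp add: mult_right_mono)
  qed
  have "\<forall>C\<in>chains A. \<exists>U\<in>A. \<forall>X\<in>C. X \<subseteq> U"
  proof
    fix C assume C: "C \<in> chains A"
    show "\<exists>U\<in>A. \<forall>X\<in>C. X \<subseteq> U"
    proof (cases "C = {}")
      case True then show ?thesis using G0 unfolding A_def by blast
    next
      case False
      have CA: "\<And>X. X \<in> C \<Longrightarrow> hbg X \<and> G0 \<subseteq> X" using chainsD2[OF C] unfolding A_def by blast
      obtain X0 where X0: "X0 \<in> C" using False by blast
      have "hbg (\<Union>C)"
      proof (rule hbgI)
        show "(0,0) \<in> \<Union>C" using X0 CA hbgD(1) by blast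
      next
        fix x a y b assume "(x,a) \<in> \<Union>C" "(y,b) \<in> \<Union>C"
        then obtain X Y where XY: "X \<in> C" "Y \<in> C" "(x,a) \<in> X" "(y,b) \<in> Y" by blast
        have "X \<subseteq> Y \<or> Y \<subseteq> X" using chainsD[OF C XY(1,2)] .
        then show "(x+y,a+b) \<in> \<Union>C"
        proof
          assume "X \<subseteq> Y"
          then have "(x+y,a+b) \<in> Y" using hbgD(2)[of Y x a y b] CA XY by blast
          then show ?thesis using XY by blast
        next
          assume "Y \<subseteq> X"
          then have "(x+y,a+b) \<in> X" using hbgD(2)[of X x a y b] CA XY by blast
          then show ?thesis using XY by blast
        qed
      next
        fix x a c assume "(x,a) \<in> \<Union>C"
        then obtain X where "X \<in> C" "(x,a) \<in> X" by blast
        then show "(c *\<^sub>R x, c * a) \<in> \<Union>C" using hbgD(3)[of X x a c] CA by blast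
      next
        fix x a assume "(x,a) \<in> \<Union>C"
        then obtain X where "X \<in> C" "(x,a) \<in> X" by blast
        then show "a \<le> norm x" using hbgD(4)[of X x a] CA by blast
      qed
      moreover have "G0 \<subseteq> \<Union>C" using X0 CA by blast
      ultimately have "\<Union>C \<in> A" unfolding A_def by blast
      then show ?thesis by blast
    qed
  qed
  from Zorn_Lemma2[OF this] obtain M where M: "M \<in> A" and max: "\<forall>X\<in>A. M \<subseteq> X \<longrightarrow> X = M" by blast
  have hM: "hbg M" and G0M: "G0 \<subseteq> M" using M unfolding A_def by auto
  have tot: "\<exists>a. (x,a) \<in> M" for x
  proof (rule ccontr)
    assume "\<nexists>a. (x, a) \<in> M"
    then obtain G' where G': "hbg G'" "M \<subseteq> G'" "G' \<noteq> M" using hbg_extend[OF hM] by blast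
    then have "G' \<in> A" using G0M unfolding A_def by blast
    then show False using max G' by blast
  qed
  define F where "F x = (SOME a. (x,a) \<in> M)" for x
  have FM: "(x, F x) \<in> M" for x unfolding F_def using tot by (rule someI_ex)
  have Feq: "(x,a) \<in> M \<Longrightarrow> F x = a" for x a using hbg_unique[OF hM FM] by blast
  have lin: "linear F"
  proof (rule linearI)
    fix x y show "F (x + y) = F x + F y" using hbgD(2)[OF hM FM FM] by (rule Feq)
  next
    fix r x show "F (r *\<^sub>R x) = r *\<^sub>R F x" using hbgD(3)[OF hM FM] by (simp add: Feq)
  qed
  have le: "F v \<le> norm v" for v using hbgD(4)[OF hM FM] .
  have ab: "\<bar>F v\<bar> \<le> norm v" for v
    using le[of v] le[of "-v"] linear_neg[OF lin, of v] by auto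
  have "(u, norm u) \<in> G0" unfolding G0_def by (auto intro!: exI[where x=1])
  then have "F u = norm u" using G0M by (intro Feq) blast
  then show ?thesis using lin ab by blast
qed

definition ev :: "nat \<Rightarrow> (nat \<Rightarrow> real) \<Rightarrow> (nat \<Rightarrow> 'a) \<Rightarrow> ('a \<Rightarrow> real) \<Rightarrow> real" where
  "ev n a p k = (\<Sum>i<n. a i * k (p i))"

lemma span_eq: "(\<lambda>k. \<Sum>i<n. a i * dirac (p i) k) = (\<lambda>k. if k \<in> Lip0 then ev n a p k else 0)"
  by (auto simp: dirac_def ev_def)

lemma free_span_alt: "free_span = {(\<lambda>k. if k \<in> Lip0 then ev n a p k else 0) | n a p. True}"
  unfolding free_span_def span_eq by blast

lemma sum_lessThan_add_nat: "sum f {..<n+m} = sum f {..<n} + sum (\<lambda>i. f (n+i)) {..<(m::nat)}"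
  by (induct m) (auto simp: add.assoc)

lemma ev_combo: "\<exists>N A P. \<forall>k. \<alpha> * ev n1 a1 p1 k + \<beta> * ev n2 a2 p2 k = ev N A P k"
proof -
  define A where "A i = (if i < n1 then \<alpha> * a1 i else \<beta> * a2 (i - n1))" for i
  define P where "P i = (if i < n1 then p1 i else p2 (i - n1))" for i
  have "\<alpha> * ev n1 a1 p1 k + \<beta> * ev n2 a2 p2 k = ev (n1+n2) A P k" for k
    unfolding ev_def sum_lessThan_add_nat
    by (simp add: A_def P_def sum_distrib_left mult.assoc)
  then show ?thesis by blast
qed

lemma span_combo:
  assumes "\<phi> \<in> free_span" "\<psi> \<in> free_span"
  shows "(\<lambda>k. \<alpha> * \<phi> k + \<beta> * \<psi> k) \<in> free_span"
proof -
  obtain n1 a1 p1 n2 a2 p2 where e: "\<phi> = (\<lambda>k. if k \<in> Lip0 then ev n1 a1 p1 k else 0)"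
    "\<psi> = (\<lambda>k. if k \<in> Lip0 then ev n2 a2 p2 k else 0)" using assms unfolding free_span_alt by blast
  obtain N A P where c: "\<And>k. \<alpha> * ev n1 a1 p1 k + \<beta> * ev n2 a2 p2 k = ev N A P k"
    using ev_combo by blast
  have "(\<lambda>k. \<alpha> * \<phi> k + \<beta> * \<psi> k) = (\<lambda>k. if k \<in> Lip0 then ev N A P k else 0)"
    unfolding e by (auto simp: c[symmetric])
  then show ?thesis unfolding free_span_alt by blast
qed

lemma dirac_span: "dirac x \<in> free_span"
  unfolding free_span_def mem_Collect_eq
  apply (rule exI[where x=1])
  apply (rule exI[where x="\<lambda>_. 1"])
  apply (rule exI[where x="\<lambda>_. x"])
  by simp

lemma span_space: "\<phi> \<in> free_span \<Longrightarrow> \<phi> \<in> free_space"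
  unfolding free_space_def
  by (auto simp: free_span_alt intro!: exI[where x=\<phi>])

lemma dirac_space: "dirac x \<in> free_space"
  by (rule span_space[OF dirac_span])

lemma k_bound:
  fixes k :: "'a::real_normed_vector \<Rightarrow> real"
  assumes "k \<in> Lip0" "lipnorm k \<le> 1" shows "\<bar>k x\<bar> \<le> norm x"
proof -
  have "k 0 = 0" using assms unfolding Lip0_def by blast
  then have "\<bar>k x\<bar> \<le> lipnorm k * norm x" using lip_bound[OF assms(1), of x 0] by simp
  also have "\<dots> \<le> norm x" using assms(2) by (simp add: mult_left_le_one_le lipnorm_nonneg[OF assms(1)])
  finally show ?thesis .
qed

lemma ev_bound:
  fixes k :: "'a::real_normed_vector \<Rightarrow> real"
  assumes "k \<in> Lip0" "lipnorm k \<le> 1" shows "\<bar>ev n a p k\<bar> \<le> (\<Sum>i<n. \<bar>a i\<bar> * norm (p i))"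
  unfolding ev_def
  by (rule order_trans[OF sum_abs]) (auto intro!: sum_mono simp: abs_mult mult_left_mono k_bound[OF assms])

lemma space_rep:
  assumes "\<phi> \<in> free_space" "e > 0"
  shows "\<exists>n a p. \<forall>k\<in>Lip0. lipnorm k \<le> 1 \<longrightarrow> \<bar>\<phi> k - ev n a p k\<bar> \<le> e"
proof -
  obtain \<psi> where "\<psi> \<in> free_span" "\<forall>g\<in>Lip0. lipnorm g \<le> 1 \<longrightarrow> \<bar>\<phi> g - \<psi> g\<bar> \<le> e"
    using assms unfolding free_space_def by blast
  then obtain n a p where "\<psi> = (\<lambda>k. if k \<in> Lip0 then ev n a p k else 0)"
    "\<forall>g\<in>Lip0. lipnorm g \<le> 1 \<longrightarrow> \<bar>\<phi> g - \<psi> g\<bar> \<le> e"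
    unfolding free_span_alt by blast
  then have "\<forall>k\<in>Lip0. lipnorm k \<le> 1 \<longrightarrow> \<bar>\<phi> k - ev n a p k\<bar> \<le> e" by simp
  then show ?thesis by blast
qed

lemma space_vanish: "\<phi> \<in> free_space \<Longrightarrow> g \<notin> Lip0 \<Longrightarrow> \<phi> g = 0"
  unfolding free_space_def by blast

lemma space_bdd:
  assumes "\<phi> \<in> free_space"
  shows "bdd_above {\<bar>\<phi> g\<bar> | g. g \<in> Lip0 \<and> lipnorm g \<le> 1}"
proof -
  obtain n a p where r: "\<forall>k\<in>Lip0. lipnorm k \<le> 1 \<longrightarrow> \<bar>\<phi> k - ev n a p k\<bar> \<le> 1"
    using space_rep[OF assms, of 1] by auto
  have "\<bar>\<phi> g\<bar> \<le> 1 + (\<Sum>i<n. \<bar>a i\<bar> * norm (p i))" if "g \<in> Lip0" "lipnorm g \<le> 1" for g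
  proof -
    have a: "\<bar>\<phi> g - ev n a p g\<bar> \<le> 1" using r that by blast
    have b: "\<bar>ev n a p g\<bar> \<le> (\<Sum>i<n. \<bar>a i\<bar> * norm (p i))" using ev_bound[OF that] .
    show ?thesis using a b by linarith
  qed
  then show ?thesis by (intro bdd_aboveI) blast
qed

lemma dualnorm_ge:
  assumes "\<phi> \<in> free_space" "g \<in> Lip0" "lipnorm g \<le> 1"
  shows "\<bar>\<phi> g\<bar> \<le> dualnorm \<phi>"
  unfolding dualnorm_def using assms space_bdd[OF assms(1)] by (intro cSup_upper) auto

lemma dualnorm_nonneg:
  assumes "\<phi> \<in> free_space" shows "0 \<le> dualnorm \<phi>"
  using dualnorm_ge[OF assms zero_Lip0 zero_lipnorm] by simp

lemma dualnorm_le: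
  assumes "\<And>g. g \<in> Lip0 \<Longrightarrow> lipnorm g \<le> 1 \<Longrightarrow> \<bar>\<phi> g\<bar> \<le> B"
  shows "dualnorm \<phi> \<le> B"
  unfolding dualnorm_def using assms zero_Lip0 zero_lipnorm by (intro cSup_least) auto

lemma space_combo:
  assumes "\<phi> \<in> free_space" "\<psi> \<in> free_space"
  shows "(\<lambda>k. \<alpha> * \<phi> k + \<beta> * \<psi> k) \<in> free_space"
  unfolding free_space_def mem_Collect_eq
proof (intro conjI allI impI)
  fix g :: "'a \<Rightarrow> real" assume "g \<notin> Lip0"
  then show "\<alpha> * \<phi> g + \<beta> * \<psi> g = 0"
    by (simp add: space_vanish[OF assms(1)] space_vanish[OF assms(2)])
next
  fix e :: real assume e: "e > 0"
  define e' where "e' = e / (\<bar>\<alpha>\<bar> + \<bar>\<beta>\<bar> + 1)"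
  have e': "e' > 0" using e unfolding e'_def by (simp add: add_pos_nonneg)
  obtain \<psi>1 where p1: "\<psi>1 \<in> free_span" "\<forall>g\<in>Lip0. lipnorm g \<le> 1 \<longrightarrow> \<bar>\<phi> g - \<psi>1 g\<bar> \<le> e'"
    using assms(1) e' unfolding free_space_def by blast
  obtain \<psi>2 where p2: "\<psi>2 \<in> free_span" "\<forall>g\<in>Lip0. lipnorm g \<le> 1 \<longrightarrow> \<bar>\<psi> g - \<psi>2 g\<bar> \<le> e'"
    using assms(2) e' unfolding free_space_def by blast
  have "\<bar>(\<alpha> * \<phi> g + \<beta> * \<psi> g) - (\<alpha> * \<psi>1 g + \<beta> * \<psi>2 g)\<bar> \<le> e"
    if "g \<in> Lip0" "lipnorm g \<le> 1" for g
  proof -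
    have "\<bar>(\<alpha> * \<phi> g + \<beta> * \<psi> g) - (\<alpha> * \<psi>1 g + \<beta> * \<psi>2 g)\<bar>
        = \<bar>\<alpha> * (\<phi> g - \<psi>1 g) + \<beta> * (\<psi> g - \<psi>2 g)\<bar>" by (simp add: algebra_simps)
    also have "\<dots> \<le> \<bar>\<alpha>\<bar> * \<bar>\<phi> g - \<psi>1 g\<bar> + \<bar>\<beta>\<bar> * \<bar>\<psi> g - \<psi>2 g\<bar>"
      by (metis abs_mult abs_triangle_ineq)
    also have "\<dots> \<le> \<bar>\<alpha>\<bar> * e' + \<bar>\<beta>\<bar> * e'"
      using p1 p2 that by (intro add_mono mult_left_mono) auto
    also have "\<dots> \<le> (\<bar>\<alpha>\<bar> + \<bar>\<beta>\<bar> + 1) * e'" using e' by (simp add: algebra_simps)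
    also have "\<dots> = e" unfolding e'_def
    proof -
      have "\<bar>\<alpha>\<bar> + \<bar>\<beta>\<bar> + 1 > 0" by (simp add: add_pos_nonneg)
      then show "(\<bar>\<alpha>\<bar> + \<bar>\<beta>\<bar> + 1) * (e / (\<bar>\<alpha>\<bar> + \<bar>\<beta>\<bar> + 1)) = e" by simp
    qed
    finally show ?thesis .
  qed
  then have H: "\<forall>g\<in>Lip0. lipnorm g \<le> 1 \<longrightarrow>
      \<bar>\<alpha> * \<phi> g + \<beta> * \<psi> g - (\<lambda>k. \<alpha> * \<psi>1 k + \<beta> * \<psi>2 k) g\<bar> \<le> e" by simp
  show "\<exists>\<psi>'\<in>free_span. \<forall>g\<in>Lip0. lipnorm g \<le> 1 \<longrightarrow>
      \<bar>\<alpha> * \<phi> g + \<beta> * \<psi> g - \<psi>' g\<bar> \<le> e"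
    using H span_combo[OF p1(1) p2(1), of \<alpha> \<beta>]
    by (intro bexI[where x="\<lambda>k. \<alpha> * \<psi>1 k + \<beta> * \<psi>2 k"]) simp_all
qed

lemma real_zero_by_eps:
  fixes x K :: real
  assumes "\<And>e. e > 0 \<Longrightarrow> \<bar>x\<bar> \<le> e * K" "K \<ge> 0"
  shows "x = 0"
proof (rule ccontr)
  assume "x \<noteq> 0"
  then have "\<bar>x\<bar> > 0" by simp
  define e where "e = \<bar>x\<bar> / (2 * (K + 1))"
  have "e > 0" using \<open>\<bar>x\<bar> > 0\<close> assms(2) unfolding e_def by simp
  then have "\<bar>x\<bar> \<le> e * K" by (rule assms(1))
  also have "e * K < \<bar>x\<bar>"
  proof -
    have q: "K / (2 * (K + 1)) < 1" using assms(2) by (simp add: divide_less_eq)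
    have "e * K = \<bar>x\<bar> * (K / (2 * (K + 1)))" unfolding e_def by simp
    also have "\<dots> < \<bar>x\<bar> * 1" using q \<open>\<bar>x\<bar> > 0\<close> by (intro mult_strict_left_mono) auto
    finally show ?thesis by simp
  qed
  finally show False by simp
qed

lemma space_zero:
  assumes "\<phi> \<in> free_space" shows "\<phi> (\<lambda>x. 0) = 0"
proof (rule real_zero_by_eps[where K=1])
  fix e :: real assume "e > 0"
  then obtain n a p where "\<forall>k\<in>Lip0. lipnorm k \<le> 1 \<longrightarrow> \<bar>\<phi> k - ev n a p k\<bar> \<le> e"
    using space_rep[OF assms] by blast
  then have "\<bar>\<phi> (\<lambda>x. 0) - ev n a p (\<lambda>x. 0)\<bar> \<le> e" using zero_Lip0 zero_lipnorm by blast
  then show "\<bar>\<phi> (\<lambda>x. 0)\<bar> \<le> e * 1" by (simp add: ev_def)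
qed simp

lemma ops_lin:
  "T \<in> free_ops \<Longrightarrow> \<phi> \<in> free_space \<Longrightarrow> \<psi> \<in> free_space \<Longrightarrow>
     T (\<lambda>g. a * \<phi> g + b * \<psi> g) = a *\<^sub>R T \<phi> + b *\<^sub>R T \<psi>"
  unfolding free_ops_def by blast

lemma ops_bound:
  assumes "T \<in> free_ops" shows "\<exists>C\<ge>0. \<forall>\<phi>\<in>free_space. norm (T \<phi>) \<le> C * dualnorm \<phi>"
proof -
  obtain C where C: "\<forall>\<phi>\<in>free_space. norm (T \<phi>) \<le> C * dualnorm \<phi>"
    using assms unfolding free_ops_def by blast
  have "norm (T \<phi>) \<le> \<bar>C\<bar> * dualnorm \<phi>" if "\<phi> \<in> free_space" for \<phi>
  proof -
    have "norm (T \<phi>) \<le> C * dualnorm \<phi>" using C that by blast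
    also have "\<dots> \<le> \<bar>C\<bar> * dualnorm \<phi>" using dualnorm_nonneg[OF that] by (simp add: mult_right_mono)
    finally show ?thesis .
  qed
  then show ?thesis by (intro exI[where x="\<bar>C\<bar>"]) auto
qed

lemma ops_zero:
  assumes "T \<in> free_ops" shows "T (\<lambda>g. 0) = 0"
  using ops_lin[OF assms dirac_space dirac_space, of 0 0 0 0] by simp

lemma ops_span:
  fixes n :: nat
  assumes "T \<in> free_ops"
  shows "T (\<lambda>k. \<Sum>i<n. a i * dirac (p i) k) = (\<Sum>i<n. a i *\<^sub>R T (dirac (p i)))"
proof (induct n)
  case 0 then show ?case using ops_zero[OF assms] by simp
next
  case (Suc n)
  have sp: "(\<lambda>k. \<Sum>i<n. a i * dirac (p i) k) \<in> free_space"
    by (rule span_space) (auto simp: free_span_def)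
  have "T (\<lambda>k. \<Sum>i<Suc n. a i * dirac (p i) k)
      = T (\<lambda>g. 1 * (\<lambda>k. \<Sum>i<n. a i * dirac (p i) k) g + a n * dirac (p n) g)" by simp
  also have "\<dots> = 1 *\<^sub>R T (\<lambda>k. \<Sum>i<n. a i * dirac (p i) k) + a n *\<^sub>R T (dirac (p n))"
    by (rule ops_lin[OF assms sp dirac_space])
  finally show ?case using Suc by simp
qed

lemma opnorm_props:
  assumes "\<exists>C. \<forall>\<phi>\<in>free_space. norm (R \<phi>) \<le> C * dualnorm \<phi>"
  shows "0 \<le> free_opnorm R"
    and "\<phi> \<in> free_space \<Longrightarrow> dualnorm \<phi> \<le> 1 \<Longrightarrow> norm (R \<phi>) \<le> free_opnorm R"
proof -
  obtain C where C: "\<forall>\<phi>\<in>free_space. norm (R \<phi>) \<le> C * dualnorm \<phi>" using assms by blast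
  have "norm (R \<phi>) \<le> \<bar>C\<bar>" if "\<phi> \<in> free_space" "dualnorm \<phi> \<le> 1" for \<phi>
  proof -
    have "norm (R \<phi>) \<le> C * dualnorm \<phi>" using C that by blast
    also have "\<dots> \<le> \<bar>C\<bar> * dualnorm \<phi>" using dualnorm_nonneg[OF that(1)]
      by (simp add: mult_right_mono)
    also have "\<dots> \<le> \<bar>C\<bar>" using that(2) dualnorm_nonneg[OF that(1)]
      by (simp add: mult_left_le)
    finally show ?thesis .
  qed
  then have bdd: "bdd_above (insert 0 {norm (R \<phi>) | \<phi>. \<phi> \<in> free_space \<and> dualnorm \<phi> \<le> 1})"
    by (intro bdd_aboveI[where M="\<bar>C\<bar>"]) auto
  show "0 \<le> free_opnorm R" unfolding free_opnorm_def by (rule cSup_upper[OF _ bdd]) simp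
  show "norm (R \<phi>) \<le> free_opnorm R" if "\<phi> \<in> free_space" "dualnorm \<phi> \<le> 1"
    unfolding free_opnorm_def using that by (intro cSup_upper[OF _ bdd]) auto
qed

definition fsum :: "('a \<Rightarrow> 'c::real_vector) \<Rightarrow> nat \<Rightarrow> (nat \<Rightarrow> real) \<Rightarrow> (nat \<Rightarrow> 'a) \<Rightarrow> 'c" where
  "fsum f n a p = (\<Sum>i<n. a i *\<^sub>R f (p i))"

lemma ev_fsum: "ev n a p k = fsum k n a p"
  by (simp add: ev_def fsum_def)

definition catA :: "real \<Rightarrow> real \<Rightarrow> nat \<Rightarrow> (nat \<Rightarrow> real) \<Rightarrow> (nat \<Rightarrow> real) \<Rightarrow> nat \<Rightarrow> real" where
  "catA \<alpha> \<beta> n1 a1 a2 i = (if i < n1 then \<alpha> * a1 i else \<beta> * a2 (i - n1))"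
definition catP :: "nat \<Rightarrow> (nat \<Rightarrow> 'a) \<Rightarrow> (nat \<Rightarrow> 'a) \<Rightarrow> nat \<Rightarrow> 'a" where
  "catP n1 p1 p2 i = (if i < n1 then p1 i else p2 (i - n1))"

lemma fsum_cat:
  "\<alpha> *\<^sub>R fsum f n1 a1 p1 + \<beta> *\<^sub>R fsum f n2 a2 p2 = fsum f (n1+n2) (catA \<alpha> \<beta> n1 a1 a2) (catP n1 p1 p2)"
  unfolding fsum_def sum_lessThan_add_nat
  by (simp add: catA_def catP_def scaleR_sum_right)

lemma ev_cat:
  "\<alpha> * ev n1 a1 p1 k + \<beta> * ev n2 a2 p2 k = ev (n1+n2) (catA \<alpha> \<beta> n1 a1 a2) (catP n1 p1 p2) k"
  using fsum_cat[of \<alpha> k n1 a1 p1 \<beta> n2 a2 p2] by (simp add: ev_fsum)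

lemma linear_fsum: "linear F \<Longrightarrow> F (fsum f n a p) = fsum (\<lambda>x. F (f x)) n a p"
  unfolding fsum_def by (simp add: linear_sum linear_scale)

lemma ball_fun:
  fixes f :: "'a::real_normed_vector \<Rightarrow> 'b::real_normed_vector"
  assumes f: "f \<in> Lip0" and F: "linear F" "\<forall>v. \<bar>F v\<bar> \<le> norm v"
  shows "(\<lambda>x. F (f x) / (lipnorm f + 1)) \<in> Lip0" "lipnorm (\<lambda>x. F (f x) / (lipnorm f + 1)) \<le> 1"
proof -
  define M where "M = lipnorm f + 1"
  have M: "M > 0" "lipnorm f \<le> M" using lipnorm_nonneg[OF f] unfolding M_def by auto
  have b: "norm (F (f x) / M - F (f y) / M) \<le> 1 * norm (x - y)" for x y
  proof -
    have "F (f x) / M - F (f y) / M = F (f x - f y) / M"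
      by (simp add: linear_diff[OF F(1)] diff_divide_distrib)
    then have "norm (F (f x) / M - F (f y) / M) = \<bar>F (f x - f y)\<bar> / M"
      using M by (simp add: abs_divide)
    also have "\<dots> \<le> norm (f x - f y) / M" using F(2) M by (simp add: divide_right_mono)
    also have "\<dots> \<le> lipnorm f * norm (x - y) / M" using lip_bound[OF f] M by (simp add: divide_right_mono)
    also have "\<dots> \<le> M * norm (x - y) / M" using M by (intro divide_right_mono mult_right_mono) auto
    also have "\<dots> = 1 * norm (x - y)" using M by simp
    finally show ?thesis .
  qed
  have z: "F (f 0) / M = 0" using f linear_0[OF F(1)] unfolding Lip0_def by simp
  show "(\<lambda>x. F (f x) / (lipnorm f + 1)) \<in> Lip0" using Lip0I[of "\<lambda>x. F (f x) / M", OF b z] M_def by simp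
  show "lipnorm (\<lambda>x. F (f x) / (lipnorm f + 1)) \<le> 1" using lipnorm_le[of "\<lambda>x. F (f x) / M", OF b] M_def by simp
qed

lemma norm_by_functionals:
  fixes y :: "'b::real_normed_vector"
  assumes "\<And>F. linear F \<Longrightarrow> \<forall>v. \<bar>F v\<bar> \<le> norm v \<Longrightarrow> \<bar>F y\<bar> \<le> B"
  shows "norm y \<le> B"
proof -
  obtain F where "linear F" "\<forall>v. \<bar>F v\<bar> \<le> norm v" "F y = norm y" using hahn_banach_norming by blast
  moreover have "\<bar>F y\<bar> \<le> B" using assms calculation(1,2) by blast
  ultimately show ?thesis by simp
qed

lemma fsum_diff_bound:
  fixes f :: "'a::real_normed_vector \<Rightarrow> 'b::real_normed_vector"
  assumes f: "f \<in> Lip0"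
    and H: "\<forall>k\<in>Lip0. lipnorm k \<le> 1 \<longrightarrow> \<bar>ev n1 a1 p1 k - (\<alpha> * ev n2 a2 p2 k + \<beta> * ev n3 a3 p3 k)\<bar> \<le> e"
  shows "norm (fsum f n1 a1 p1 - (\<alpha> *\<^sub>R fsum f n2 a2 p2 + \<beta> *\<^sub>R fsum f n3 a3 p3)) \<le> (lipnorm f + 1) * e"
proof (rule norm_by_functionals)
  fix F :: "'b \<Rightarrow> real" assume F: "linear F" "\<forall>v. \<bar>F v\<bar> \<le> norm v"
  define M where "M = lipnorm f + 1"
  have M: "M > 0" using lipnorm_nonneg[OF f] unfolding M_def by auto
  define k where "k = (\<lambda>x. F (f x) / M)"
  have k: "k \<in> Lip0" "lipnorm k \<le> 1" using ball_fun[OF f F] unfolding k_def M_def by auto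
  have evk: "ev n a p k = F (fsum f n a p) / M" for n a p
    unfolding ev_fsum k_def fsum_def
    by (simp add: linear_sum[OF F(1)] linear_scale[OF F(1)] sum_divide_distrib)
  have "F (fsum f n1 a1 p1 - (\<alpha> *\<^sub>R fsum f n2 a2 p2 + \<beta> *\<^sub>R fsum f n3 a3 p3))
      = M * (ev n1 a1 p1 k - (\<alpha> * ev n2 a2 p2 k + \<beta> * ev n3 a3 p3 k))"
    unfolding evk using M by (simp add: linear_diff[OF F(1)] linear_add[OF F(1)] linear_scale[OF F(1)] algebra_simps)
  also have "\<bar>\<dots>\<bar> \<le> M * e" using H k M by (simp add: abs_mult)
  finally show "\<bar>F (fsum f n1 a1 p1 - (\<alpha> *\<^sub>R fsum f n2 a2 p2 + \<beta> *\<^sub>R fsum f n3 a3 p3))\<bar> \<le> (lipnorm f + 1) * e"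
    unfolding M_def .
qed

definition repr :: "(('a::real_normed_vector \<Rightarrow> real) \<Rightarrow> real) \<Rightarrow> nat \<Rightarrow> nat \<times> (nat \<Rightarrow> real) \<times> (nat \<Rightarrow> 'a)" where
  "repr \<phi> m = (SOME t. case t of (n, a, p) \<Rightarrow>
      (\<forall>k\<in>Lip0. lipnorm k \<le> 1 \<longrightarrow> \<bar>\<phi> k - ev n a p k\<bar> \<le> 1 / real (Suc m)))"

lemma repr_prop:
  assumes "\<phi> \<in> free_space" "repr \<phi> m = (n, a, p)"
  shows "\<forall>k\<in>Lip0. lipnorm k \<le> 1 \<longrightarrow> \<bar>\<phi> k - ev n a p k\<bar> \<le> 1 / real (Suc m)"
proof -
  let ?P = "\<lambda>t. case t of (n, a, p) \<Rightarrow>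
      (\<forall>k\<in>Lip0. lipnorm k \<le> 1 \<longrightarrow> \<bar>\<phi> k - ev n a p k\<bar> \<le> 1 / real (Suc m))"
  obtain n0 a0 p0 where "\<forall>k\<in>Lip0. lipnorm k \<le> 1 \<longrightarrow> \<bar>\<phi> k - ev n0 a0 p0 k\<bar> \<le> 1 / real (Suc m)"
    using space_rep[OF assms(1), of "1 / real (Suc m)"] by auto
  then have "?P (n0, a0, p0)" by simp
  then have "?P (repr \<phi> m)" unfolding repr_def by (rule someI)
  then show ?thesis using assms(2) by simp
qed

definition Vseq :: "('a::real_normed_vector \<Rightarrow> 'b::real_vector) \<Rightarrow> (('a \<Rightarrow> real) \<Rightarrow> real) \<Rightarrow> nat \<Rightarrow> 'b" where
  "Vseq f \<phi> m = (case repr \<phi> m of (n, a, p) \<Rightarrow> fsum f n a p)"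

definition Tlin :: "('a::real_normed_vector \<Rightarrow> 'b::real_normed_vector) \<Rightarrow> (('a \<Rightarrow> real) \<Rightarrow> real) \<Rightarrow> 'b" where
  "Tlin f \<phi> = lim (Vseq f \<phi>)"

lemma le_by_seq:
  fixes x A K :: real
  assumes "\<And>m. x \<le> A + K / real (Suc m)"
  shows "x \<le> A"
proof -
  have "(\<lambda>m. A + K * inverse (real (Suc m))) \<longlonglongrightarrow> A + K * 0"
    by (intro tendsto_intros LIMSEQ_inverse_real_of_nat)
  then have "(\<lambda>m. A + K / real (Suc m)) \<longlonglongrightarrow> A" by (simp add: divide_inverse)
  then show ?thesis using assms by (intro LIMSEQ_le_const[of "\<lambda>m. A + K / real (Suc m)"]) auto
qed

lemma Vseq_close:
  fixes f :: "'a::real_normed_vector \<Rightarrow> 'b::real_normed_vector"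
  assumes f: "f \<in> Lip0" and \<phi>: "\<phi> \<in> free_space"
  assumes H: "\<forall>k\<in>Lip0. lipnorm k \<le> 1 \<longrightarrow> \<bar>\<phi> k - ev n a p k\<bar> \<le> e"
  shows "norm (fsum f n a p - Vseq f \<phi> m) \<le> (lipnorm f + 1) * (e + 1 / real (Suc m))"
proof -
  obtain n' a' p' where r: "repr \<phi> m = (n', a', p')" by (metis prod_cases3)
  have r': "\<forall>k\<in>Lip0. lipnorm k \<le> 1 \<longrightarrow> \<bar>\<phi> k - ev n' a' p' k\<bar> \<le> 1 / real (Suc m)"
    by (rule repr_prop[OF \<phi> r])
  have "\<forall>k\<in>Lip0. lipnorm k \<le> 1 \<longrightarrow> \<bar>ev n a p k - (1 * ev n' a' p' k + 0 * ev 0 a p k)\<bar> \<le> e + 1 / real (Suc m)"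
  proof (intro ballI impI)
    fix k :: "'a \<Rightarrow> real" assume "k \<in> Lip0" "lipnorm k \<le> 1"
    then have "\<bar>\<phi> k - ev n a p k\<bar> \<le> e" "\<bar>\<phi> k - ev n' a' p' k\<bar> \<le> 1 / real (Suc m)" using H r' by auto
    then show "\<bar>ev n a p k - (1 * ev n' a' p' k + 0 * ev 0 a p k)\<bar> \<le> e + 1 / real (Suc m)" by simp
  qed
  from fsum_diff_bound[OF f this] show ?thesis by (simp add: Vseq_def r)
qed

lemma Vseq_conv:
  fixes f :: "'a::real_normed_vector \<Rightarrow> 'b::banach"
  assumes f: "f \<in> Lip0" and \<phi>: "\<phi> \<in> free_space"
  shows "Vseq f \<phi> \<longlonglongrightarrow> Tlin f \<phi>"
proof -
  define M where "M = lipnorm f + 1"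
  have M: "M > 0" using lipnorm_nonneg[OF f] unfolding M_def by auto
  have "Cauchy (Vseq f \<phi>)"
  proof (rule metric_CauchyI)
    fix e :: real assume e: "e > 0"
    obtain N where N: "inverse (real (Suc N)) < e / (2 * M)"
      using reals_Archimedean[of "e / (2 * M)"] e M by auto
    have "dist (Vseq f \<phi> m) (Vseq f \<phi> n) < e" if "m \<ge> N" "n \<ge> N" for m n
    proof -
      obtain n' a' p' where r: "repr \<phi> m = (n', a', p')" by (metis prod_cases3)
      have "norm (fsum f n' a' p' - Vseq f \<phi> n) \<le> M * (1 / real (Suc m) + 1 / real (Suc n))"
        using Vseq_close[OF f \<phi> repr_prop[OF \<phi> r]] unfolding M_def .
      also have "\<dots> \<le> M * (inverse (real (Suc N)) + inverse (real (Suc N)))"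
        using that M by (intro mult_left_mono add_mono) (auto simp: divide_inverse intro!: le_imp_inverse_le)
      also have "\<dots> < M * (e / (2 * M) + e / (2 * M))"
        using N M by (intro mult_strict_left_mono add_strict_mono) auto
      also have "\<dots> = e" using M by (simp add: field_simps)
      finally show ?thesis by (simp add: dist_norm Vseq_def r)
    qed
    then show "\<exists>N. \<forall>m\<ge>N. \<forall>n\<ge>N. dist (Vseq f \<phi> m) (Vseq f \<phi> n) < e" by blast
  qed
  then show ?thesis unfolding Tlin_def by (simp add: Cauchy_convergent_iff convergent_LIMSEQ_iff)
qed

lemma Tlin_approx:
  fixes f :: "'a::real_normed_vector \<Rightarrow> 'b::banach"
  assumes f: "f \<in> Lip0" and \<phi>: "\<phi> \<in> free_space"
  assumes H: "\<forall>k\<in>Lip0. lipnorm k \<le> 1 \<longrightarrow> \<bar>\<phi> k - ev n a p k\<bar> \<le> e"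
  shows "norm (fsum f n a p - Tlin f \<phi>) \<le> (lipnorm f + 1) * e"
proof -
  have l1: "(\<lambda>m. norm (fsum f n a p - Vseq f \<phi> m)) \<longlonglongrightarrow> norm (fsum f n a p - Tlin f \<phi>)"
    by (intro tendsto_intros Vseq_conv[OF f \<phi>])
  have "(\<lambda>m. (lipnorm f + 1) * (e + inverse (real (Suc m)))) \<longlonglongrightarrow> (lipnorm f + 1) * (e + 0)"
    by (intro tendsto_intros LIMSEQ_inverse_real_of_nat)
  then have l2: "(\<lambda>m. (lipnorm f + 1) * (e + 1 / real (Suc m))) \<longlonglongrightarrow> (lipnorm f + 1) * e"
    by (simp add: divide_inverse)
  show ?thesis
    by (rule LIMSEQ_le[OF l1 l2]) (use Vseq_close[OF f \<phi> H] in blast)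
qed

lemma Tlin_dirac:
  fixes f :: "'a::real_normed_vector \<Rightarrow> 'b::banach"
  assumes f: "f \<in> Lip0"
  shows "Tlin f (dirac x) = f x"
proof -
  have "\<forall>k\<in>Lip0. lipnorm k \<le> 1 \<longrightarrow> \<bar>dirac x k - ev 1 (\<lambda>_. 1) (\<lambda>_. x) k\<bar> \<le> 0"
    by (simp add: dirac_def ev_def)
  from Tlin_approx[OF f dirac_space this] show ?thesis by (simp add: fsum_def)
qed

lemma Tlin_ops:
  fixes f :: "'a::real_normed_vector \<Rightarrow> 'b::banach"
  assumes f: "f \<in> Lip0"
  shows "Tlin f \<in> free_ops"
proof -
  define M where "M = lipnorm f + 1"
  have M: "M > 0" using lipnorm_nonneg[OF f] unfolding M_def by auto
  have lin: "Tlin f (\<lambda>g. \<alpha> * \<phi> g + \<beta> * \<psi> g) = \<alpha> *\<^sub>R Tlin f \<phi> + \<beta> *\<^sub>R Tlin f \<psi>"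
    if \<phi>: "\<phi> \<in> free_space" and \<psi>: "\<psi> \<in> free_space" for \<phi> \<psi> \<alpha> \<beta>
  proof -
    define chi where "chi = (\<lambda>g. \<alpha> * \<phi> g + \<beta> * \<psi> g)"
    have chi: "chi \<in> free_space" unfolding chi_def by (rule space_combo[OF \<phi> \<psi>])
    have "norm (Tlin f chi - (\<alpha> *\<^sub>R Tlin f \<phi> + \<beta> *\<^sub>R Tlin f \<psi>)) \<le> 0 + (2 * M * (\<bar>\<alpha>\<bar> + \<bar>\<beta>\<bar>)) / real (Suc m)" for m
    proof -
      obtain n1 a1 p1 where r1: "repr \<phi> m = (n1, a1, p1)" by (metis prod_cases3)
      obtain n2 a2 p2 where r2: "repr \<psi> m = (n2, a2, p2)" by (metis prod_cases3)
      note R1 = repr_prop[OF \<phi> r1] and R2 = repr_prop[OF \<psi> r2]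
      define e where "e = 1 / real (Suc m)"
      have e: "e \<ge> 0" unfolding e_def by simp
      have "\<forall>k\<in>Lip0. lipnorm k \<le> 1 \<longrightarrow> \<bar>chi k - ev (n1+n2) (catA \<alpha> \<beta> n1 a1 a2) (catP n1 p1 p2) k\<bar> \<le> (\<bar>\<alpha>\<bar> + \<bar>\<beta>\<bar>) * e"
      proof (intro ballI impI)
        fix k :: "'a \<Rightarrow> real" assume k: "k \<in> Lip0" "lipnorm k \<le> 1"
        have "\<bar>chi k - ev (n1+n2) (catA \<alpha> \<beta> n1 a1 a2) (catP n1 p1 p2) k\<bar>
            = \<bar>\<alpha> * (\<phi> k - ev n1 a1 p1 k) + \<beta> * (\<psi> k - ev n2 a2 p2 k)\<bar>"
          unfolding chi_def ev_cat[symmetric] by (simp add: algebra_simps)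
        also have "\<dots> \<le> \<bar>\<alpha>\<bar> * \<bar>\<phi> k - ev n1 a1 p1 k\<bar> + \<bar>\<beta>\<bar> * \<bar>\<psi> k - ev n2 a2 p2 k\<bar>"
          by (metis abs_mult abs_triangle_ineq)
        also have "\<dots> \<le> \<bar>\<alpha>\<bar> * e + \<bar>\<beta>\<bar> * e"
          using R1 R2 k unfolding e_def by (intro add_mono mult_left_mono) auto
        finally show "\<bar>chi k - ev (n1+n2) (catA \<alpha> \<beta> n1 a1 a2) (catP n1 p1 p2) k\<bar> \<le> (\<bar>\<alpha>\<bar> + \<bar>\<beta>\<bar>) * e"
          by (simp add: algebra_simps)
      qed
      from Tlin_approx[OF f chi this]
      have A: "norm (\<alpha> *\<^sub>R fsum f n1 a1 p1 + \<beta> *\<^sub>R fsum f n2 a2 p2 - Tlin f chi) \<le> M * ((\<bar>\<alpha>\<bar> + \<bar>\<beta>\<bar>) * e)"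
        unfolding fsum_cat M_def .
      have B1: "norm (fsum f n1 a1 p1 - Tlin f \<phi>) \<le> M * e"
        using Tlin_approx[OF f \<phi> R1] unfolding M_def e_def .
      have B2: "norm (fsum f n2 a2 p2 - Tlin f \<psi>) \<le> M * e"
        using Tlin_approx[OF f \<psi> R2] unfolding M_def e_def .
      let ?X = "\<alpha> *\<^sub>R fsum f n1 a1 p1 + \<beta> *\<^sub>R fsum f n2 a2 p2 - Tlin f chi"
      let ?Y = "fsum f n1 a1 p1 - Tlin f \<phi>" and ?Z = "fsum f n2 a2 p2 - Tlin f \<psi>"
      have EQ: "Tlin f chi - (\<alpha> *\<^sub>R Tlin f \<phi> + \<beta> *\<^sub>R Tlin f \<psi>) = - ?X + \<alpha> *\<^sub>R ?Y + \<beta> *\<^sub>R ?Z"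
        by (simp add: algebra_simps)
      have t1: "norm (- ?X + \<alpha> *\<^sub>R ?Y + \<beta> *\<^sub>R ?Z) \<le> norm (- ?X + \<alpha> *\<^sub>R ?Y) + norm (\<beta> *\<^sub>R ?Z)"
        by (rule norm_triangle_ineq)
      have t2: "norm (- ?X + \<alpha> *\<^sub>R ?Y) \<le> norm (- ?X) + norm (\<alpha> *\<^sub>R ?Y)"
        by (rule norm_triangle_ineq)
      have t3: "norm (- ?X) + norm (\<alpha> *\<^sub>R ?Y) + norm (\<beta> *\<^sub>R ?Z)
          \<le> M * ((\<bar>\<alpha>\<bar> + \<bar>\<beta>\<bar>) * e) + \<bar>\<alpha>\<bar> * (M * e) + \<bar>\<beta>\<bar> * (M * e)"
        unfolding norm_minus_cancel norm_scaleR
        by (rule add_mono[OF add_mono[OF A mult_left_mono[OF B1 abs_ge_zero]] mult_left_mono[OF B2 abs_ge_zero]])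
      have t4: "M * ((\<bar>\<alpha>\<bar> + \<bar>\<beta>\<bar>) * e) + \<bar>\<alpha>\<bar> * (M * e) + \<bar>\<beta>\<bar> * (M * e)
          = 2 * M * (\<bar>\<alpha>\<bar> + \<bar>\<beta>\<bar>) * e" by (simp add: algebra_simps)
      have t5: "2 * M * (\<bar>\<alpha>\<bar> + \<bar>\<beta>\<bar>) * e = 0 + (2 * M * (\<bar>\<alpha>\<bar> + \<bar>\<beta>\<bar>)) / real (Suc m)"
        unfolding e_def by simp
      show ?thesis unfolding EQ using t1 t2 t3 t4 t5 by linarith
    qed
    then have "norm (Tlin f chi - (\<alpha> *\<^sub>R Tlin f \<phi> + \<beta> *\<^sub>R Tlin f \<psi>)) \<le> 0" by (rule le_by_seq)
    then show ?thesis unfolding chi_def by simp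
  qed
  have bnd: "norm (Tlin f \<phi>) \<le> M * dualnorm \<phi>" if \<phi>: "\<phi> \<in> free_space" for \<phi>
  proof -
    have "norm (Tlin f \<phi>) \<le> M * dualnorm \<phi> + (2 * M) / real (Suc m)" for m
    proof -
      obtain n1 a1 p1 where r1: "repr \<phi> m = (n1, a1, p1)" by (metis prod_cases3)
      note R1 = repr_prop[OF \<phi> r1]
      have "\<forall>k\<in>Lip0. lipnorm k \<le> 1 \<longrightarrow> \<bar>ev n1 a1 p1 k - (0 * ev 0 a1 p1 k + 0 * ev 0 a1 p1 k)\<bar> \<le> dualnorm \<phi> + 1 / real (Suc m)"
      proof (intro ballI impI)
        fix k :: "'a \<Rightarrow> real" assume k: "k \<in> Lip0" "lipnorm k \<le> 1"
        have "\<bar>\<phi> k\<bar> \<le> dualnorm \<phi>" by (rule dualnorm_ge[OF \<phi> k])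
        moreover have "\<bar>\<phi> k - ev n1 a1 p1 k\<bar> \<le> 1 / real (Suc m)" using R1 k by blast
        ultimately show "\<bar>ev n1 a1 p1 k - (0 * ev 0 a1 p1 k + 0 * ev 0 a1 p1 k)\<bar> \<le> dualnorm \<phi> + 1 / real (Suc m)"
          by simp
      qed
      from fsum_diff_bound[OF f this] have A: "norm (fsum f n1 a1 p1) \<le> M * (dualnorm \<phi> + 1 / real (Suc m))"
        unfolding M_def by simp
      have B: "norm (fsum f n1 a1 p1 - Tlin f \<phi>) \<le> M * (1 / real (Suc m))"
        using Tlin_approx[OF f \<phi> R1] unfolding M_def .
      have "norm (Tlin f \<phi>) \<le> norm (fsum f n1 a1 p1) + norm (fsum f n1 a1 p1 - Tlin f \<phi>)"
        using norm_triangle_ineq4[of "fsum f n1 a1 p1" "fsum f n1 a1 p1 - Tlin f \<phi>"] by simp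
      also have "\<dots> \<le> M * (dualnorm \<phi> + 1 / real (Suc m)) + M * (1 / real (Suc m))"
        using A B by (rule add_mono)
      also have "\<dots> = M * dualnorm \<phi> + (2 * M) / real (Suc m)" by (simp add: algebra_simps)
      finally show ?thesis .
    qed
    then show ?thesis by (rule le_by_seq)
  qed
  have L: "\<forall>\<phi>\<in>free_space. \<forall>\<psi>\<in>free_space. \<forall>a b.
      Tlin f (\<lambda>g. a * \<phi> g + b * \<psi> g) = a *\<^sub>R Tlin f \<phi> + b *\<^sub>R Tlin f \<psi>"
    by (intro ballI allI lin)
  have B: "\<exists>C. \<forall>\<phi>\<in>free_space. norm (Tlin f \<phi>) \<le> C * dualnorm \<phi>"
    by (intro exI[where x=M] ballI bnd)
  show ?thesis unfolding free_ops_def mem_Collect_eq by (rule conjI[OF L B])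
qed

lemma dirac0: "dirac (0::'a::real_normed_vector) = (\<lambda>k. 0)"
  by (auto simp: dirac_def Lip0_def)

lemma op_dirac_bound:
  fixes R :: "(('a::real_normed_vector \<Rightarrow> real) \<Rightarrow> real) \<Rightarrow> 'b::real_normed_vector"
  assumes bd: "\<exists>C. \<forall>\<phi>\<in>free_space. norm (R \<phi>) \<le> C * dualnorm \<phi>"
    and lin: "\<And>a b. R (\<lambda>k. a * dirac x k + b * dirac y k) = a *\<^sub>R R (dirac x) + b *\<^sub>R R (dirac y)"
  shows "norm (R (dirac x) - R (dirac y)) \<le> free_opnorm R * norm (x - y)"
proof (cases "x = y")
  case True then show ?thesis by simp
next
  case False
  define r where "r = norm (x - y)"
  have r: "r > 0" using False unfolding r_def by simp
  define m where "m = (\<lambda>k. (1/r) * dirac x k + (-1/r) * dirac y k)"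
  have m: "m \<in> free_space" unfolding m_def by (rule space_combo[OF dirac_space dirac_space])
  have "dualnorm m \<le> 1"
  proof (rule dualnorm_le)
    fix k :: "'a \<Rightarrow> real" assume k: "k \<in> Lip0" "lipnorm k \<le> 1"
    have "m k = (k x - k y) / r" unfolding m_def using k by (simp add: dirac_def diff_divide_distrib)
    moreover have "\<bar>k x - k y\<bar> \<le> r"
    proof -
      have "\<bar>k x - k y\<bar> \<le> lipnorm k * r" using lip_bound[OF k(1)] unfolding r_def by simp
      also have "\<dots> \<le> r" using k(2) r by (simp add: mult_left_le_one_le lipnorm_nonneg[OF k(1)])
      finally show ?thesis .
    qed
    ultimately show "\<bar>m k\<bar> \<le> 1" using r by (simp add: abs_divide)
  qed
  from opnorm_props(2)[OF bd m this] have "norm (R m) \<le> free_opnorm R" .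
  moreover have "R m = (1/r) *\<^sub>R (R (dirac x) - R (dirac y))"
    unfolding m_def lin by (simp add: algebra_simps)
  ultimately have "norm (R (dirac x) - R (dirac y)) / r \<le> free_opnorm R" using r by simp
  then show ?thesis using r unfolding r_def by (simp add: divide_le_eq mult.commute)
qed

lemma key:
  fixes S :: "(('a::real_normed_vector \<Rightarrow> real) \<Rightarrow> real) \<Rightarrow> 'b::real_normed_vector"
  assumes S: "S \<in> free_ops" and \<phi>: "\<phi> \<in> free_space"
    and F: "linear F" "\<forall>v. \<bar>F v\<bar> \<le> norm v"
    and h: "(\<lambda>x. c * F (S (dirac x))) \<in> Lip0" "lipnorm (\<lambda>x. c * F (S (dirac x))) \<le> 1"
  shows "\<phi> (\<lambda>x. c * F (S (dirac x))) = c * F (S \<phi>)"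
proof -
  let ?h = "\<lambda>x. c * F (S (dirac x))"
  obtain C where C: "C \<ge> 0" "\<forall>\<phi>\<in>free_space. norm (S \<phi>) \<le> C * dualnorm \<phi>"
    using ops_bound[OF S] by blast
  show ?thesis
  proof (rule eq_iff_diff_eq_0[THEN iffD2], rule real_zero_by_eps[where K="1 + \<bar>c\<bar> * C"])
    fix e :: real assume e: "e > 0"
    obtain n a p where rep: "\<forall>k\<in>Lip0. lipnorm k \<le> 1 \<longrightarrow> \<bar>\<phi> k - ev n a p k\<bar> \<le> e"
      using space_rep[OF \<phi> e] by blast
    define \<psi> where "\<psi> = (\<lambda>k. \<Sum>i<n. a i * dirac (p i) k)"
    have \<psi>: "\<psi> \<in> free_space" unfolding \<psi>_def by (rule span_space) (auto simp: free_span_def)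
    have \<psi>eq: "\<psi> k = ev n a p k" if "k \<in> Lip0" for k
      unfolding \<psi>_def span_eq using that by simp
    have S\<psi>: "S \<psi> = (\<Sum>i<n. a i *\<^sub>R S (dirac (p i)))" unfolding \<psi>_def by (rule ops_span[OF S])
    have 1: "\<psi> ?h = c * F (S \<psi>)"
      unfolding \<psi>eq[OF h(1)] ev_def S\<psi>
      by (simp add: linear_sum[OF F(1)] linear_scale[OF F(1)] sum_distrib_left algebra_simps)
    define d where "d = (\<lambda>k. 1 * \<phi> k + (-1) * \<psi> k)"
    have d: "d \<in> free_space" unfolding d_def by (rule space_combo[OF \<phi> \<psi>])
    have Sd: "S d = S \<phi> - S \<psi>" unfolding d_def ops_lin[OF S \<phi> \<psi>] by simp
    have "dualnorm d \<le> e"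
    proof (rule dualnorm_le)
      fix k :: "'a \<Rightarrow> real" assume k: "k \<in> Lip0" "lipnorm k \<le> 1"
      then show "\<bar>d k\<bar> \<le> e" unfolding d_def using rep \<psi>eq[OF k(1)] by simp
    qed
    then have "norm (S d) \<le> C * e" using C d by (meson mult_left_mono order_trans)
    then have 2: "\<bar>F (S \<phi>) - F (S \<psi>)\<bar> \<le> C * e"
      using F(2) Sd linear_diff[OF F(1)] by (metis order_trans)
    have 3: "\<bar>\<phi> ?h - \<psi> ?h\<bar> \<le> e" using rep \<psi>eq h by simp
    have "\<phi> ?h - c * F (S \<phi>) = (\<phi> ?h - \<psi> ?h) - c * (F (S \<phi>) - F (S \<psi>))"
      using 1 by (simp add: algebra_simps)
    also have "\<bar>\<dots>\<bar> \<le> \<bar>\<phi> ?h - \<psi> ?h\<bar> + \<bar>c\<bar> * \<bar>F (S \<phi>) - F (S \<psi>)\<bar>"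
      by (metis abs_mult abs_triangle_ineq4)
    also have "\<dots> \<le> e + \<bar>c\<bar> * (C * e)"
      using 2 3 by (intro add_mono mult_left_mono) auto
    also have "\<dots> = e * (1 + \<bar>c\<bar> * C)" by (simp add: algebra_simps)
    finally show "\<bar>\<phi> ?h - c * F (S \<phi>)\<bar> \<le> e * (1 + \<bar>c\<bar> * C)" .
  next
    show "0 \<le> 1 + \<bar>c\<bar> * C" using C by simp
  qed
qed

lemma lipA_of_NA:
  fixes S :: "(('a::real_normed_vector \<Rightarrow> real) \<Rightarrow> real) \<Rightarrow> 'b::banach"
  assumes UC: "uniformly_convex_space TYPE('b)" and SNA: "S \<in> free_NA"
  shows "(\<lambda>x. S (dirac x)) \<in> lipA"
proof -
  obtain \<mu> where S: "S \<in> free_ops" and \<mu>: "\<mu> \<in> free_space" "dualnorm \<mu> = 1"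
    "norm (S \<mu>) = free_opnorm S" using SNA unfolding free_NA_def by blast
  define N where "N = free_opnorm S"
  define g where "g = (\<lambda>x. S (dirac x))"
  have Sb: "\<exists>C. \<forall>\<phi>\<in>free_space. norm (S \<phi>) \<le> C * dualnorm \<phi>" using S unfolding free_ops_def by blast
  have N0: "N \<ge> 0" unfolding N_def by (rule opnorm_props(1)[OF Sb])
  have gl: "norm (g x - g y) \<le> N * norm (x - y)" for x y
    unfolding g_def N_def by (rule op_dirac_bound[OF Sb ops_lin[OF S dirac_space dirac_space]])
  have g0: "g 0 = 0" unfolding g_def dirac0 by (rule ops_zero[OF S])
  have gL: "g \<in> Lip0" by (rule Lip0I[OF gl g0])
  define L where "L = lipnorm g"
  have LN: "L \<le> N" unfolding L_def by (rule lipnorm_le[OF gl N0])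
  have L0: "0 \<le> L" unfolding L_def by (rule lipnorm_nonneg[OF gL])
  have "\<exists>z xs ys. norm z = L \<and> (\<forall>n. xs n \<noteq> ys n) \<and>
      ((\<lambda>n. (1 / norm (xs n - ys n)) *\<^sub>R (g (xs n) - g (ys n))) \<longlonglongrightarrow> z)"
  proof (cases "N = 0")
    case True
    obtain k where k: "k \<in> Lip0" "lipnorm k \<le> 1" "\<mu> k \<noteq> 0"
    proof (rule ccontr)
      assume "\<not> thesis"
      then have "\<And>k. k \<in> Lip0 \<Longrightarrow> lipnorm k \<le> 1 \<Longrightarrow> \<bar>\<mu> k\<bar> \<le> 0" using that by force
      then have "dualnorm \<mu> \<le> 0" by (rule dualnorm_le)
      then show False using \<mu>(2) by simp
    qed
    have "k \<noteq> (\<lambda>x. 0)" using k(3) space_zero[OF \<mu>(1)] by auto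
    then obtain x where x: "k x \<noteq> 0" by auto
    have "k 0 = 0" using k(1) unfolding Lip0_def by blast
    then have x0: "x \<noteq> 0" using x by auto
    have "norm (g x - g 0) \<le> 0" using gl[of x 0] True by simp
    then have gx: "g x - g 0 = 0" by simp
    show ?thesis
      by (rule exI[where x=0], rule exI[where x="\<lambda>n. x"], rule exI[where x="\<lambda>n. 0"])
        (use x0 gx LN L0 True in simp)
  next
    case False
    then have Npos: "N > 0" using N0 by simp
    obtain F where F: "linear F" "\<forall>v. \<bar>F v\<bar> \<le> norm v" "F (S \<mu>) = norm (S \<mu>)"
      using hahn_banach_norming by blast
    have FSmu: "F (S \<mu>) = N" using F(3) \<mu>(3) unfolding N_def by simp
    define q where "q x y = (1 / norm (x - y)) *\<^sub>R (g x - g y)" for x y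
    have Fq: "F (q x y) = (F (g x) - F (g y)) / norm (x - y)" for x y
      unfolding q_def by (simp add: linear_scale[OF F(1)] linear_diff[OF F(1)])
    have claim: "\<exists>x y. x \<noteq> y \<and> F (q x y) > N - N / (2 * real (Suc n))" for n
    proof (rule ccontr)
      assume "\<not> ?thesis"
      then have H: "x \<noteq> y \<Longrightarrow> F (q x y) \<le> N - N / (2 * real (Suc n))" for x y by force
      define lam where "lam = N - N / (2 * real (Suc n))"
      have lam: "lam > 0" "lam < N"
      proof -
        have "N / (2 * real (Suc n)) \<le> N / 2" using Npos by (intro divide_left_mono) auto
        moreover have "N / (2 * real (Suc n)) > 0" using Npos by simp
        ultimately show "lam > 0" "lam < N" unfolding lam_def using Npos by linarith+
      qed
      have hb: "\<bar>F (g x) - F (g y)\<bar> \<le> lam * norm (x - y)" for x y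
      proof (cases "x = y")
        case True then show ?thesis by simp
      next
        case False
        have a: "(F (g x) - F (g y)) / norm (x - y) \<le> lam" using H[OF False] Fq unfolding lam_def by simp
        have b: "(F (g y) - F (g x)) / norm (x - y) \<le> lam" using H[of y x] False Fq[of y x] unfolding lam_def
          by (simp add: norm_minus_commute)
        have "norm (x - y) > 0" using False by simp
        then show ?thesis using a b by (simp add: divide_le_eq abs_le_iff mult.commute)
      qed
      define h where "h = (\<lambda>x. (1 / lam) * F (S (dirac x)))"
      have hb': "norm (h x - h y) \<le> 1 * norm (x - y)" for x y
      proof -
        have "norm (h x - h y) = \<bar>F (g x) - F (g y)\<bar> / lam"
        proof -
          have "h x - h y = (F (g x) - F (g y)) / lam" unfolding h_def g_def by (simp add: diff_divide_distrib)
          then show ?thesis using lam by (simp add: abs_divide)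
        qed
        also have "\<dots> \<le> lam * norm (x - y) / lam" using lam by (intro divide_right_mono hb) simp
        also have "\<dots> = 1 * norm (x - y)" using lam by simp
        finally show ?thesis .
      qed
      have h0: "h 0 = 0" unfolding h_def using g0 linear_0[OF F(1)] unfolding g_def by simp
      have hL: "h \<in> Lip0" by (rule Lip0I[OF hb' h0])
      have hn: "lipnorm h \<le> 1" by (rule lipnorm_le[OF hb']) simp
      have "\<mu> h = (1 / lam) * F (S \<mu>)"
        unfolding h_def by (rule key[OF S \<mu>(1) F(1,2)]) (use hL hn in \<open>simp_all add: h_def\<close>)
      then have "\<mu> h = N / lam" using FSmu by simp
      moreover have "N / lam > 1" using lam by simp
      moreover have "\<bar>\<mu> h\<bar> \<le> 1" using dualnorm_ge[OF \<mu>(1) hL hn] \<mu>(2) by simp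
      ultimately show False by linarith
    qed
    then obtain xs ys where xy: "\<And>n. xs n \<noteq> ys n" "\<And>n. F (q (xs n) (ys n)) > N - N / (2 * real (Suc n))"
      by metis
    define Q where "Q n = q (xs n) (ys n)" for n
    have QL: "norm (Q n) \<le> L" for n
    proof -
      have "norm (Q n) = norm (g (xs n) - g (ys n)) / norm (xs n - ys n)" unfolding Q_def q_def by simp
      also have "\<dots> \<le> L" using lip_bound[OF gL, of "xs n" "ys n"] xy(1)[of n] unfolding L_def
        by (simp add: divide_le_eq mult.commute)
      finally show ?thesis .
    qed
    have FQ: "F (Q n) > N - N / (2 * real (Suc n))" for n unfolding Q_def by (rule xy(2))
    have FQn: "F (Q n) \<le> norm (Q n)" for n using F(2) by (metis abs_le_iff)
    have "Cauchy Q"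
    proof (rule metric_CauchyI)
      fix e :: real assume e: "e > 0"
      obtain \<delta> where \<delta>: "\<delta> > 0" "\<And>x y::'b. norm x \<le> 1 \<Longrightarrow> norm y \<le> 1 \<Longrightarrow>
          norm (x - y) \<ge> e / N \<Longrightarrow> norm ((1/2) *\<^sub>R (x + y)) \<le> 1 - \<delta>"
        using UC e Npos unfolding uniformly_convex_space_def by (metis divide_pos_pos)
      obtain n0 where n0: "inverse (real (Suc n0)) < \<delta>" using reals_Archimedean[OF \<delta>(1)] by blast
      have FQ': "F (Q n) > N - N * \<delta>" if "n \<ge> n0" for n
      proof -
        have "N / (2 * real (Suc n)) \<le> N * inverse (real (Suc n0))"
        proof -
          have r: "N * real n0 \<le> N * real n" using that Npos by (simp add: mult_left_mono)
          have r2: "0 \<le> N * real n" using Npos by simp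
          show ?thesis using Npos by (simp add: field_simps) (use r r2 in linarith)
        qed
        also have "\<dots> < N * \<delta>" using n0 Npos by simp
        finally show ?thesis using FQ[of n] by simp
      qed
      have "dist (Q m) (Q n) < e" if "m \<ge> n0" "n \<ge> n0" for m n
      proof (rule ccontr)
        assume "\<not> dist (Q m) (Q n) < e"
        then have de: "norm (Q m - Q n) \<ge> e" by (simp add: dist_norm)
        define x where "x = (1/N) *\<^sub>R Q m"
        define y where "y = (1/N) *\<^sub>R Q n"
        have nx: "norm x \<le> 1" unfolding x_def using QL[of m] LN Npos by (simp add: divide_le_eq)
        have ny: "norm y \<le> 1" unfolding y_def using QL[of n] LN Npos by (simp add: divide_le_eq)
        have "x - y = (1/N) *\<^sub>R (Q m - Q n)" unfolding x_def y_def by (simp add: algebra_simps)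
        then have "norm (x - y) = norm (Q m - Q n) / N" using Npos by simp
        then have "norm (x - y) \<ge> e / N" using de Npos by (simp add: divide_right_mono)
        from \<delta>(2)[OF nx ny this] have A: "norm ((1/2) *\<^sub>R (x + y)) \<le> 1 - \<delta>" .
        have "F ((1/2) *\<^sub>R (x + y)) = (F (Q m) + F (Q n)) / (2 * N)"
          unfolding x_def y_def by (simp add: linear_scale[OF F(1)] linear_add[OF F(1)] field_simps add_divide_distrib)
        also have "\<dots> > (2 * N - 2 * N * \<delta>) / (2 * N)"
          using FQ'[OF that(1)] FQ'[OF that(2)] Npos by (intro divide_strict_right_mono) auto
        also have "(2 * N - 2 * N * \<delta>) / (2 * N) = 1 - \<delta>" using Npos by (simp add: field_simps)
        finally have "F ((1/2) *\<^sub>R (x + y)) > 1 - \<delta>" .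
        moreover have "F ((1/2) *\<^sub>R (x + y)) \<le> norm ((1/2) *\<^sub>R (x + y))" using F(2) by (metis abs_le_iff)
        ultimately show False using A by simp
      qed
      then show "\<exists>M. \<forall>m\<ge>M. \<forall>n\<ge>M. dist (Q m) (Q n) < e" by blast
    qed
    then obtain z where z: "Q \<longlonglongrightarrow> z" using Cauchy_convergent_iff convergent_def by blast
    have nz: "(\<lambda>n. norm (Q n)) \<longlonglongrightarrow> norm z" by (rule tendsto_norm[OF z])
    have "norm z \<le> L" using nz QL by (intro LIMSEQ_le_const2) auto
    moreover have "N \<le> norm z"
    proof -
      have "(\<lambda>n. N - (N/2) * inverse (real (Suc n))) \<longlonglongrightarrow> N - (N/2) * 0"
        by (intro tendsto_intros LIMSEQ_inverse_real_of_nat)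
      then have l: "(\<lambda>n. N - N / (2 * real (Suc n))) \<longlonglongrightarrow> N" by (simp add: field_simps)
      have "N - N / (2 * real (Suc n)) \<le> norm (Q n)" for n using FQ[of n] FQn[of n] by simp
      then show ?thesis by (intro LIMSEQ_le[OF l nz]) auto
    qed
    ultimately have "norm z = L" using LN by simp
    then show ?thesis using xy(1) z unfolding Q_def q_def by blast
  qed
  then show ?thesis unfolding lipA_def L_def using gL g_def by blast
qed

theorem corollary3p9:
  assumes "uniformly_convex_space TYPE('b::banach)"
    and "\<forall>T \<in> (free_ops :: ((('a::banach \<Rightarrow> real) \<Rightarrow> real) \<Rightarrow> 'b) set). \<forall>\<epsilon>>0.
           \<exists>S\<in>free_NA. free_opnorm (\<lambda>\<phi>. S \<phi> - T \<phi>) < \<epsilon>"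
  shows "\<forall>f \<in> (Lip0 :: ('a \<Rightarrow> 'b) set). \<forall>\<epsilon>>0. \<exists>g\<in>lipA. lipnorm (\<lambda>x. f x - g x) < \<epsilon>"
proof (intro ballI allI impI)
  fix f :: "'a \<Rightarrow> 'b" and \<epsilon> :: real
  assume f: "f \<in> Lip0" and e: "\<epsilon> > 0"
  define T where "T = Tlin f"
  have T: "T \<in> free_ops" unfolding T_def by (rule Tlin_ops[OF f])
  have Td: "T (dirac x) = f x" for x unfolding T_def by (rule Tlin_dirac[OF f])
  obtain S where S: "S \<in> free_NA" and Sd: "free_opnorm (\<lambda>\<phi>. S \<phi> - T \<phi>) < \<epsilon>"
    using assms(2) T e by blast
  have Sops: "S \<in> free_ops" using S unfolding free_NA_def by blast
  define g where "g = (\<lambda>x. S (dirac x))"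
  have gA: "g \<in> lipA" unfolding g_def by (rule lipA_of_NA[OF assms(1) S])
  define R where "R = (\<lambda>\<phi>. S \<phi> - T \<phi>)"
  obtain C1 where C1: "\<forall>\<phi>\<in>free_space. norm (S \<phi>) \<le> C1 * dualnorm \<phi>"
    using Sops unfolding free_ops_def by blast
  obtain C2 where C2: "\<forall>\<phi>\<in>free_space. norm (T \<phi>) \<le> C2 * dualnorm \<phi>"
    using T unfolding free_ops_def by blast
  have Rb: "\<exists>C. \<forall>\<phi>\<in>free_space. norm (R \<phi>) \<le> C * dualnorm \<phi>"
  proof (intro exI ballI)
    fix \<phi> :: "('a \<Rightarrow> real) \<Rightarrow> real" assume \<phi>: "\<phi> \<in> free_space"
    have "norm (R \<phi>) \<le> norm (S \<phi>) + norm (T \<phi>)" unfolding R_def by (rule norm_triangle_ineq4)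
    also have "\<dots> \<le> C1 * dualnorm \<phi> + C2 * dualnorm \<phi>" using C1 C2 \<phi> by (intro add_mono) auto
    also have "\<dots> = (C1 + C2) * dualnorm \<phi>" by (simp add: algebra_simps)
    finally show "norm (R \<phi>) \<le> (C1 + C2) * dualnorm \<phi>" .
  qed
  have Rl: "R (\<lambda>k. a * dirac x k + b * dirac y k) = a *\<^sub>R R (dirac x) + b *\<^sub>R R (dirac y)" for a b x y
    unfolding R_def ops_lin[OF Sops dirac_space dirac_space] ops_lin[OF T dirac_space dirac_space]
    by (simp add: algebra_simps)
  have O0: "0 \<le> free_opnorm R" by (rule opnorm_props(1)[OF Rb])
  have "norm ((f x - g x) - (f y - g y)) \<le> free_opnorm R * norm (x - y)" for x y
  proof -
    have "(f x - g x) - (f y - g y) = - (R (dirac x) - R (dirac y))"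
      unfolding R_def g_def Td by (simp add: algebra_simps)
    then have "norm ((f x - g x) - (f y - g y)) = norm (R (dirac x) - R (dirac y))" by (simp only: norm_minus_cancel)
    also have "\<dots> \<le> free_opnorm R * norm (x - y)" by (rule op_dirac_bound[OF Rb Rl])
    finally show ?thesis .
  qed
  then have "lipnorm (\<lambda>x. f x - g x) \<le> free_opnorm R" by (rule lipnorm_le[OF _ O0])
  also have "\<dots> < \<epsilon>" using Sd unfolding R_def .
  finally show "\<exists>g\<in>lipA. lipnorm (\<lambda>x. f x - g x) < \<epsilon>" using gA by blast
qed

end
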